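(* Let $F$ be a tract and let $J\subseteq\Delta^r_n$ be an M-convex set that is not of the form $J'+\tau$ with $J'\subseteq\{0,1\}^n$ M-convex and $\tau\in\mathbb Z^n$. If there exists a weak $F$-representation of $J$, then $F$ is near-idempotent. If moreover $\delta^+_{J,i}-\delta^-_{J,i}\ge3$ for some $i\in[n]$, then $F$ is idempotent.
   Context: A tract is a commutative monoid $F$ (written multiplicatively) with an absorbing element $0$ such that $F^\times=F\setminus\{0\}$ is an abelian group, together with a subset $N_F$ of the group semiring $F^+=\mathbb N[F^\times]$ (finite formal sums of elements of $F^\times$; $0$ is the empty sum) which contains $0$, is closed under addition and under multiplication by elements of $F^+$, and such that for every $a\in F$ there is a unique $b\in F$ with $a+b\in N_F$; this $b$ is denoted $-a$. $F$ is idempotent if $1+1\in N_F$ and $1+1+1\in N_F$; near-idempotent if $1+1\in N_F$ (i.e. $-1=1$) and $1+1+x\in N_F$ for some $x\in F^\times$. $\Delta^r_n=\{\alpha\in\mathbb N^n:\sum\alpha_i=r\}$; M-convex: nonempty $J$ such that for $\alpha,\beta\in J$ and $i$ with $\alpha_i<\beta_i$ there is $j$ with $\alpha_j>\beta_j$ and $\alpha+\epsilon_i-\epsilon_j,\beta-\epsilon_i+\epsilon_j\in J$. $\delta^\mp_J$ are the componentwise min/max of $J$; $\bar J=J-\delta^-_J$; $\bar r=r-\sum_i\delta^-_{J,i}$; $\omega_J=\delta^+_J-\delta^-_J$. For $\boldsymbol\beta\in[n]^m$ let $\Sigma\boldsymbol\beta=\epsilon_{\beta_1}+\dots+\epsilon_{\beta_m}$;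 juxtaposition $\boldsymbol\alpha ij$ denotes concatenation of tuples. A weak $F$-representation of $J$ is a function $\rho\colon[n]^{\bar r}\to F$ such that (i) $\rho(\boldsymbol\beta)\ne0$ iff $\Sigma\boldsymbol\beta\in\bar J$; (ii) $\rho(\beta_{\sigma(1)},\dots,\beta_{\sigma(\bar r)})=\mathrm{sign}(\sigma)\rho(\beta_1,\dots,\beta_{\bar r})$ for all $\sigma\in S_{\bar r}$; (iii) $\rho(\boldsymbol\alpha jk)\rho(\boldsymbol\alpha il)-\rho(\boldsymbol\alpha ik)\rho(\boldsymbol\alpha jl)+\rho(\boldsymbol\alpha ij)\rho(\boldsymbol\alpha kl)\in N_F$ for all $\boldsymbol\alpha\in[n]^{\bar r-2}$ and $i,j,k,l\in[n]$ with $\Sigma(\boldsymbol\alpha ijkl)\le\omega_J$. *)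

theory Defs
  imports "HOL-Library.Multiset" "HOL-Combinatorics.Permutations"
begin

text \<open>The group semiring F^+ = N[F^x] is modelled by multisets of nonzero elements
  (the empty multiset being the empty sum 0).\<close>

record 'f tract =
  tmul :: "'f \<Rightarrow> 'f \<Rightarrow> 'f"
  tone :: 'f
  tzero :: 'f
  tnull :: "'f multiset set"

definition tplus :: "'f tract \<Rightarrow> 'f multiset set" where
  "tplus F = {x. set_mset x \<subseteq> - {tzero F}}"

definition temb :: "'f tract \<Rightarrow> 'f \<Rightarrow> 'f multiset" where
  "temb F a = (if a = tzero F then {#} else {#a#})"

definition tsmult :: "'f tract \<Rightarrow> 'f multiset \<Rightarrow> 'f multiset \<Rightarrow> 'f multiset" where
  "tsmult F x y = sum_mset (image_mset (\<lambda>a. image_mset (\<lambda>b. tmul F a b) y) x)"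

definition is_tract :: "'f tract \<Rightarrow> bool" where
  "is_tract F \<longleftrightarrow>
     (\<forall>a b c. tmul F (tmul F a b) c = tmul F a (tmul F b c)) \<and>
     (\<forall>a b. tmul F a b = tmul F b a) \<and>
     (\<forall>a. tmul F (tone F) a = a) \<and>
     (\<forall>a. tmul F (tzero F) a = tzero F) \<and>
     tone F \<noteq> tzero F \<and>
     (\<forall>a b. a \<noteq> tzero F \<longrightarrow> b \<noteq> tzero F \<longrightarrow> tmul F a b \<noteq> tzero F) \<and>
     (\<forall>a. a \<noteq> tzero F \<longrightarrow> (\<exists>b. b \<noteq> tzero F \<and> tmul F a b = tone F)) \<and>
     tnull F \<subseteq> tplus F \<and>
     {#} \<in> tnull F \<and>
     (\<forall>x\<in>tnull F. \<forall>y\<in>tnull F. x + y \<in> tnull F) \<and>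
     (\<forall>x\<in>tplus F. \<forall>y\<in>tnull F. tsmult F x y \<in> tnull F) \<and>
     (\<forall>a. \<exists>!b. temb F a + temb F b \<in> tnull F)"

definition tneg :: "'f tract \<Rightarrow> 'f \<Rightarrow> 'f" where
  "tneg F a = (THE b. temb F a + temb F b \<in> tnull F)"

definition idempotent_tract :: "'f tract \<Rightarrow> bool" where
  "idempotent_tract F \<longleftrightarrow>
     {#tone F, tone F#} \<in> tnull F \<and> {#tone F, tone F, tone F#} \<in> tnull F"

definition near_idempotent_tract :: "'f tract \<Rightarrow> bool" where
  "near_idempotent_tract F \<longleftrightarrow>
     {#tone F, tone F#} \<in> tnull F \<and>
     (\<exists>x. x \<noteq> tzero F \<and> {#tone F, tone F, x#} \<in> tnull F)"

text \<open>Vectors in N^n are functions nat \<Rightarrow> nat vanishing outside [n] = {0..<n}.\<close>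

definition Delta :: "nat \<Rightarrow> nat \<Rightarrow> (nat \<Rightarrow> nat) set" where
  "Delta r n = {\<alpha>. (\<forall>i\<ge>n. \<alpha> i = 0) \<and> (\<Sum>i<n. \<alpha> i) = r}"

definition M_convex :: "nat \<Rightarrow> (nat \<Rightarrow> nat) set \<Rightarrow> bool" where
  "M_convex n J \<longleftrightarrow> J \<noteq> {} \<and>
     (\<forall>\<alpha>\<in>J. \<forall>\<beta>\<in>J. \<forall>i<n. \<alpha> i < \<beta> i \<longrightarrow>
        (\<exists>j<n. \<alpha> j > \<beta> j \<and>
           \<alpha>(i := \<alpha> i + 1, j := \<alpha> j - 1) \<in> J \<and>
           \<beta>(i := \<beta> i - 1, j := \<beta> j + 1) \<in> J))"

definition delta_min :: "(nat \<Rightarrow> nat) set \<Rightarrow> nat \<Rightarrow> nat" where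
  "delta_min J i = Min ((\<lambda>\<alpha>. \<alpha> i) ` J)"

definition delta_max :: "(nat \<Rightarrow> nat) set \<Rightarrow> nat \<Rightarrow> nat" where
  "delta_max J i = Max ((\<lambda>\<alpha>. \<alpha> i) ` J)"

definition Jbar :: "(nat \<Rightarrow> nat) set \<Rightarrow> (nat \<Rightarrow> nat) set" where
  "Jbar J = (\<lambda>\<alpha> i. \<alpha> i - delta_min J i) ` J"

definition rbar :: "nat \<Rightarrow> nat \<Rightarrow> (nat \<Rightarrow> nat) set \<Rightarrow> nat" where
  "rbar r n J = r - (\<Sum>i<n. delta_min J i)"

definition omegaJ :: "(nat \<Rightarrow> nat) set \<Rightarrow> nat \<Rightarrow> nat" where
  "omegaJ J i = delta_max J i - delta_min J i"

definition tuples :: "nat \<Rightarrow> nat \<Rightarrow> nat list set" where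
  "tuples n m = {\<beta>. length \<beta> = m \<and> set \<beta> \<subseteq> {..<n}}"

definition SigmaT :: "nat list \<Rightarrow> nat \<Rightarrow> nat" where
  "SigmaT \<beta> = (\<lambda>i. count (mset \<beta>) i)"

definition sign_act :: "'f tract \<Rightarrow> (nat \<Rightarrow> nat) \<Rightarrow> 'f \<Rightarrow> 'f" where
  "sign_act F \<sigma> x = (if evenperm \<sigma> then x else tmul F (tneg F (tone F)) x)"

definition weak_rep :: "'f tract \<Rightarrow> nat \<Rightarrow> nat \<Rightarrow> (nat \<Rightarrow> nat) set \<Rightarrow> (nat list \<Rightarrow> 'f) \<Rightarrow> bool" where
  "weak_rep F r n J \<rho> \<longleftrightarrow>
     (let m = rbar r n J in
       (\<forall>\<beta>\<in>tuples n m. \<rho> \<beta> \<noteq> tzero F \<longleftrightarrow> SigmaT \<beta> \<in> Jbar J) \<and>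
       (\<forall>\<beta>\<in>tuples n m. \<forall>\<sigma>. \<sigma> permutes {..<m} \<longrightarrow>
          \<rho> (map (\<lambda>k. \<beta> ! \<sigma> k) [0..<m]) = sign_act F \<sigma> (\<rho> \<beta>)) \<and>
       (2 \<le> m \<longrightarrow>
        (\<forall>\<alpha>\<in>tuples n (m - 2). \<forall>i<n. \<forall>j<n. \<forall>k<n. \<forall>l<n.
          SigmaT (\<alpha> @ [i, j, k, l]) \<le> omegaJ J \<longrightarrow>
            temb F (tmul F (\<rho> (\<alpha> @ [j, k])) (\<rho> (\<alpha> @ [i, l])))
          + temb F (tneg F (tmul F (\<rho> (\<alpha> @ [i, k])) (\<rho> (\<alpha> @ [j, l]))))
          + temb F (tmul F (\<rho> (\<alpha> @ [i, j])) (\<rho> (\<alpha> @ [k, l]))) \<in> tnull F)))"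

end

theory Submission
  imports Defs
begin

definition lst :: "nat \<Rightarrow> (nat \<Rightarrow> nat) \<Rightarrow> nat list" where
  "lst n g = concat (map (\<lambda>j. replicate (g j) j) [0..<n])"

lemma lst_Suc: "lst (Suc n) g = lst n g @ replicate (g n) n"
  by (simp add: lst_def)

lemma count_lst: "count (mset (lst n g)) t = (if t < n then g t else 0)"
  by (induction n) (auto simp: lst_Suc lst_def[of 0])

lemma length_lst: "length (lst n g) = (\<Sum>j<n. g j)"
  by (induction n) (auto simp: lst_Suc lst_def[of 0])

lemma set_lst: "set (lst n g) \<subseteq> {..<n}"
  by (induction n) (auto simp: lst_Suc lst_def[of 0])

lemma SigmaT_lst: "(\<forall>j\<ge>n. g j = 0) \<Longrightarrow> SigmaT (lst n g @ xs) t = g t + count (mset xs) t"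
  by (auto simp: SigmaT_def count_lst)

lemma finite_Delta: "finite (Delta r n)"
proof -
  have "Delta r n \<subseteq> (\<lambda>xs i. if i < n then xs ! i else 0) ` {xs. set xs \<subseteq> {..r} \<and> length xs = n}"
  proof
    fix f assume f: "f \<in> Delta r n"
    hence s: "(\<Sum>i<n. f i) = r" and z: "\<forall>i\<ge>n. f i = 0" by (auto simp: Delta_def)
    have le: "f i \<le> r" if "i < n" for i
      using member_le_sum[of i "{..<n}" f] that s by auto
    show "f \<in> (\<lambda>xs i. if i < n then xs ! i else 0) ` {xs. set xs \<subseteq> {..r} \<and> length xs = n}"
    proof (rule image_eqI[where x="map f [0..<n]"])
      show "f = (\<lambda>i. if i < n then map f [0..<n] ! i else 0)" using z by (auto simp: fun_eq_iff)
      show "map f [0..<n] \<in> {xs. set xs \<subseteq> {..r} \<and> length xs = n}" using le by auto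
    qed
  qed
  moreover have "finite {xs. set xs \<subseteq> {..r} \<and> length xs = (n::nat)}"
    by (rule finite_lists_length_eq) simp
  ultimately show ?thesis by (meson finite_imageI finite_subset)
qed

context
  fixes F :: "'f tract"
  assumes T: "is_tract F"
begin

lemma ex1neg: "\<exists>!b. temb F a + temb F b \<in> tnull F"
  using T unfolding is_tract_def by blast

lemma tneg_unique: "temb F a + temb F b \<in> tnull F \<Longrightarrow> tneg F a = b"
  unfolding tneg_def by (rule the1_equality[OF ex1neg])

lemma tneg_prop: "temb F a + temb F (tneg F a) \<in> tnull F"
  unfolding tneg_def by (rule theI'[OF ex1neg])

lemma mul_comm: "tmul F a b = tmul F b a" using T unfolding is_tract_def by blast
lemma mul_assoc: "tmul F (tmul F a b) c = tmul F a (tmul F b c)" using T unfolding is_tract_def by blast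
lemma mul_one: "tmul F (tone F) a = a" using T unfolding is_tract_def by blast
lemma mul_one2: "tmul F a (tone F) = a" using mul_one mul_comm by metis
lemma one_nz: "tone F \<noteq> tzero F" using T unfolding is_tract_def by blast
lemma mul_nz: "a \<noteq> tzero F \<Longrightarrow> b \<noteq> tzero F \<Longrightarrow> tmul F a b \<noteq> tzero F" using T unfolding is_tract_def by blast
lemma inv_ex: "a \<noteq> tzero F \<Longrightarrow> \<exists>b. b \<noteq> tzero F \<and> tmul F a b = tone F" using T unfolding is_tract_def by blast

lemma smult_null: "a \<noteq> tzero F \<Longrightarrow> y \<in> tnull F \<Longrightarrow> image_mset (tmul F a) y \<in> tnull F"
proof -
  assume a: "a \<noteq> tzero F" and y: "y \<in> tnull F"
  have "{#a#} \<in> tplus F" using a by (simp add: tplus_def)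
  hence "tsmult F {#a#} y \<in> tnull F" using T y unfolding is_tract_def by blast
  thus ?thesis by (simp add: tsmult_def)
qed

lemma neg_one_is_one:
  assumes "x \<noteq> tzero F" "x = tmul F (tneg F (tone F)) x"
  shows "{#tone F, tone F#} \<in> tnull F"
proof -
  obtain y where y: "tmul F x y = tone F" using inv_ex assms(1) by blast
  have "tone F = tmul F (tmul F (tneg F (tone F)) x) y" using assms(2) y by simp
  also have "\<dots> = tneg F (tone F)" by (simp add: mul_assoc y mul_one2)
  finally have "tneg F (tone F) = tone F" by simp
  with tneg_prop[of "tone F"] show ?thesis using one_nz by (simp add: temb_def add_mset_commute)
qed

lemma neg_self:
  assumes "{#tone F, tone F#} \<in> tnull F" "a \<noteq> tzero F"
  shows "tneg F a = a"
proof -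
  have "image_mset (tmul F a) {#tone F, tone F#} \<in> tnull F" using smult_null assms by blast
  hence "temb F a + temb F a \<in> tnull F" using assms(2) by (simp add: temb_def mul_one2)
  thus ?thesis by (rule tneg_unique)
qed

end

theorem propositionC:
  fixes F :: "'f tract" and r n :: nat and J :: "(nat \<Rightarrow> nat) set"
  assumes "is_tract F"
    and "J \<subseteq> Delta r n"
    and "M_convex n J"
    and "\<not> (\<exists>J' (\<tau> :: nat \<Rightarrow> int).
             J' \<subseteq> {\<alpha>. \<forall>i. \<alpha> i \<le> 1 \<and> (i \<ge> n \<longrightarrow> \<alpha> i = 0)} \<and> M_convex n J' \<and>
             (\<forall>i\<ge>n. \<tau> i = 0) \<and>
             (\<lambda>\<alpha> i. int (\<alpha> i)) ` J = (\<lambda>\<alpha> i. int (\<alpha> i) + \<tau> i) ` J')"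
    and "\<exists>\<rho>. weak_rep F r n J \<rho>"
  shows "near_idempotent_tract F \<and>
         ((\<exists>i<n. delta_max J i - delta_min J i \<ge> 3) \<longrightarrow> idempotent_tract F)"
proof -
  note T = assms(1)
  obtain \<rho> where wr: "weak_rep F r n J \<rho>" using assms(5) by blast
  define m where "m = rbar r n J"
  define D where "D = delta_min J"
  define U where "U = delta_max J"
  have W1: "\<And>\<beta>. \<beta> \<in> tuples n m \<Longrightarrow> \<rho> \<beta> \<noteq> tzero F \<longleftrightarrow> SigmaT \<beta> \<in> Jbar J"
    using wr unfolding weak_rep_def Let_def m_def by blast
  have W2: "\<And>\<beta> \<sigma>. \<beta> \<in> tuples n m \<Longrightarrow> \<sigma> permutes {..<m} \<Longrightarrow>
          \<rho> (map (\<lambda>k. \<beta> ! \<sigma> k) [0..<m]) = sign_act F \<sigma> (\<rho> \<beta>)"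
    using wr unfolding weak_rep_def Let_def m_def by blast
  have W3: "\<And>\<alpha> i j k l. 2 \<le> m \<Longrightarrow> \<alpha> \<in> tuples n (m - 2) \<Longrightarrow> i < n \<Longrightarrow> j < n \<Longrightarrow> k < n \<Longrightarrow> l < n \<Longrightarrow>
          SigmaT (\<alpha> @ [i, j, k, l]) \<le> omegaJ J \<Longrightarrow>
            temb F (tmul F (\<rho> (\<alpha> @ [j, k])) (\<rho> (\<alpha> @ [i, l])))
          + temb F (tneg F (tmul F (\<rho> (\<alpha> @ [i, k])) (\<rho> (\<alpha> @ [j, l]))))
          + temb F (tmul F (\<rho> (\<alpha> @ [i, j])) (\<rho> (\<alpha> @ [k, l]))) \<in> tnull F"
    using wr unfolding weak_rep_def Let_def m_def by blast
  have finJ: "finite J" using finite_Delta assms(2) finite_subset by blast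
  have neJ: "J \<noteq> {}" using assms(3) by (simp add: M_convex_def)
  have exch: "\<And>\<alpha> \<beta> i. \<alpha> \<in> J \<Longrightarrow> \<beta> \<in> J \<Longrightarrow> i < n \<Longrightarrow> \<alpha> i < \<beta> i \<Longrightarrow>
        (\<exists>j<n. \<alpha> j > \<beta> j \<and>
           \<alpha>(i := \<alpha> i + 1, j := \<alpha> j - 1) \<in> J \<and>
           \<beta>(i := \<beta> i - 1, j := \<beta> j + 1) \<in> J)"
    using assms(3) unfolding M_convex_def by blast
  have Dle: "\<And>\<beta> j. \<beta> \<in> J \<Longrightarrow> D j \<le> \<beta> j"
    unfolding D_def delta_min_def using finJ by (simp add: Min_le)
  have Uge: "\<And>\<beta> j. \<beta> \<in> J \<Longrightarrow> \<beta> j \<le> U j"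
    unfolding U_def delta_max_def using finJ by (simp add: Max_ge)
  have Dex: "\<And>j. \<exists>\<beta>\<in>J. \<beta> j = D j"
  proof -
    fix j
    have "D j \<in> (\<lambda>\<alpha>. \<alpha> j) ` J" unfolding D_def delta_min_def using finJ neJ by (intro Min_in) auto
    thus "\<exists>\<beta>\<in>J. \<beta> j = D j" by auto
  qed
  have Uex: "\<And>j. \<exists>\<beta>\<in>J. \<beta> j = U j"
  proof -
    fix j
    have "U j \<in> (\<lambda>\<alpha>. \<alpha> j) ` J" unfolding U_def delta_max_def using finJ neJ by (intro Max_in) auto
    thus "\<exists>\<beta>\<in>J. \<beta> j = U j" by auto
  qed
  have supp: "\<And>\<beta> j. \<beta> \<in> J \<Longrightarrow> n \<le> j \<Longrightarrow> \<beta> j = 0" using assms(2) by (auto simp: Delta_def)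
  have sumJ: "\<And>\<beta>. \<beta> \<in> J \<Longrightarrow> (\<Sum>j<n. \<beta> j) = r" using assms(2) by (auto simp: Delta_def)
  have sumbar: "\<And>\<beta>. \<beta> \<in> J \<Longrightarrow> (\<Sum>j<n. \<beta> j - D j) = m"
  proof -
    fix \<beta> assume b: "\<beta> \<in> J"
    have "(\<Sum>j<n. \<beta> j - D j) = (\<Sum>j<n. \<beta> j) - (\<Sum>j<n. D j)"
      using Dle[OF b] by (intro sum_subtractf_nat) auto
    thus "(\<Sum>j<n. \<beta> j - D j) = m" using sumJ[OF b] by (simp add: m_def rbar_def D_def)
  qed
  have inJbar: "\<And>\<beta> v. \<beta> \<in> J \<Longrightarrow> (\<And>t. v t = \<beta> t - D t) \<Longrightarrow> v \<in> Jbar J"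
  proof -
    fix \<beta> v assume "\<beta> \<in> J" "\<And>t. v t = \<beta> t - D t"
    thus "v \<in> Jbar J" unfolding Jbar_def D_def by (intro image_eqI[where x=\<beta>]) auto
  qed
  have "\<exists>i<n. D i + 2 \<le> U i"
  proof (rule ccontr)
    assume "\<not> (\<exists>i<n. D i + 2 \<le> U i)"
    hence small: "\<And>i. i < n \<Longrightarrow> U i \<le> D i + 1" by force
    define \<tau> :: "nat \<Rightarrow> int" where "\<tau> = (\<lambda>i. if i < n then int (D i) else 0)"
    have c1: "Jbar J \<subseteq> {\<alpha>. \<forall>i. \<alpha> i \<le> 1 \<and> (i \<ge> n \<longrightarrow> \<alpha> i = 0)}"
    proof
      fix v assume "v \<in> Jbar J"
      then obtain \<beta> where b: "\<beta> \<in> J" and v: "v = (\<lambda>i. \<beta> i - D i)" unfolding Jbar_def D_def by auto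
      show "v \<in> {\<alpha>. \<forall>i. \<alpha> i \<le> 1 \<and> (i \<ge> n \<longrightarrow> \<alpha> i = 0)}"
      proof (auto simp: v)
        fix i show "\<beta> i - D i \<le> Suc 0"
          using small[of i] Uge[OF b, of i] supp[OF b, of i] by (cases "i < n") auto
      next
        fix i assume "n \<le> i" thus "\<beta> i \<le> D i" using supp[OF b] by simp
      qed
    qed
    have c2: "M_convex n (Jbar J)"
      unfolding M_convex_def
    proof (intro conjI ballI allI impI)
      show "Jbar J \<noteq> {}" using neJ by (simp add: Jbar_def)
    next
      fix a b i assume a: "a \<in> Jbar J" and b: "b \<in> Jbar J" and i: "i < n" and ab: "a i < b i"
      from a obtain \<alpha> where al: "\<alpha> \<in> J" and a': "a = (\<lambda>i. \<alpha> i - D i)" unfolding Jbar_def D_def by auto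
      from b obtain \<beta> where be: "\<beta> \<in> J" and b': "b = (\<lambda>i. \<beta> i - D i)" unfolding Jbar_def D_def by auto
      have "\<alpha> i < \<beta> i" using ab a' b' Dle[OF al, of i] Dle[OF be, of i] by auto
      then obtain j where j: "j < n" "\<alpha> j > \<beta> j" and J1: "\<alpha>(i := \<alpha> i + 1, j := \<alpha> j - 1) \<in> J"
        and J2: "\<beta>(i := \<beta> i - 1, j := \<beta> j + 1) \<in> J" using exch[OF al be i] by blast
      have ij: "i \<noteq> j" using j \<open>\<alpha> i < \<beta> i\<close> by auto
      have x1: "D j \<le> \<beta> j" "D i \<le> \<alpha> i" using Dle al be by auto
      show "\<exists>j<n. b j < a j \<and> a(i := a i + 1, j := a j - 1) \<in> Jbar J \<and> b(i := b i - 1, j := b j + 1) \<in> Jbar J"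
      proof (intro exI conjI)
        show "j < n" by fact
        show "b j < a j" using a' b' j x1 by auto
        show "a(i := a i + 1, j := a j - 1) \<in> Jbar J"
          by (rule inJbar[OF J1]) (use a' ij j x1 in auto)
        show "b(i := b i - 1, j := b j + 1) \<in> Jbar J"
          by (rule inJbar[OF J2]) (use b' ij j x1 \<open>\<alpha> i < \<beta> i\<close> in auto)
      qed
    qed
    have c3: "(\<lambda>\<alpha> i. int (\<alpha> i)) ` J = (\<lambda>\<alpha> i. int (\<alpha> i) + \<tau> i) ` Jbar J"
    proof -
      have "(\<lambda>\<alpha> i. int (\<alpha> i) + \<tau> i) ` Jbar J = (\<lambda>\<alpha> i. int (\<alpha> i - D i) + \<tau> i) ` J"
        unfolding Jbar_def D_def by (simp add: image_image)
      also have "\<dots> = (\<lambda>\<alpha> i. int (\<alpha> i)) ` J"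
      proof (rule image_cong[OF refl])
        fix \<alpha> assume al: "\<alpha> \<in> J"
        show "(\<lambda>i. int (\<alpha> i - D i) + \<tau> i) = (\<lambda>i. int (\<alpha> i))"
          using Dle[OF al] supp[OF al] by (auto simp: fun_eq_iff \<tau>_def) (metis le_zero_eq not_less)
      qed
      finally show ?thesis by simp
    qed
    have "\<forall>i\<ge>n. \<tau> i = 0" by (simp add: \<tau>_def)
    with c1 c2 c3 assms(4) show False by blast
  qed
  then obtain i0 where i0: "i0 < n" "D i0 + 2 \<le> U i0" by blast

  have key: "\<And>\<beta> i. \<beta> \<in> J \<Longrightarrow> i < n \<Longrightarrow> D i + 2 \<le> \<beta> i \<Longrightarrow>
      lst n ((\<lambda>t. \<beta> t - D t)(i := \<beta> i - D i - 2)) \<in> tuples n (m-2) \<and> 2 \<le> m \<and>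
      (\<forall>a b. a < n \<longrightarrow> b < n \<longrightarrow> lst n ((\<lambda>t. \<beta> t - D t)(i := \<beta> i - D i - 2)) @ [a,b] \<in> tuples n m) \<and>
      (\<forall>xs t. SigmaT (lst n ((\<lambda>t. \<beta> t - D t)(i := \<beta> i - D i - 2)) @ xs) t =
          ((\<lambda>t. \<beta> t - D t)(i := \<beta> i - D i - 2)) t + count (mset xs) t)"
  proof -
    fix \<beta> i assume b: "\<beta> \<in> J" and i: "i < n" and bi: "D i + 2 \<le> \<beta> i"
    define g where "g = (\<lambda>t. \<beta> t - D t)(i := \<beta> i - D i - 2)"
    have gs: "\<forall>j\<ge>n. g j = 0" using supp[OF b] i by (auto simp: g_def)
    have "(\<Sum>j<n. \<beta> j - D j) = (\<Sum>j<n. g j + (if j = i then 2 else 0))"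
      by (rule sum.cong) (use bi in \<open>auto simp: g_def\<close>)
    also have "\<dots> = (\<Sum>j<n. g j) + 2" using i by (simp add: sum.distrib)
    finally have sg: "(\<Sum>j<n. g j) + 2 = m" using sumbar[OF b] by simp
    have "lst n g \<in> tuples n (m-2)" using sg set_lst[of n g] by (auto simp: tuples_def length_lst)
    moreover have "\<forall>a b. a < n \<longrightarrow> b < n \<longrightarrow> lst n g @ [a,b] \<in> tuples n m"
      using sg set_lst[of n g] by (auto simp: tuples_def length_lst)
    moreover have "\<forall>xs t. SigmaT (lst n g @ xs) t = g t + count (mset xs) t"
      using SigmaT_lst[OF gs] by blast
    ultimately show "?thesis \<beta> i" using sg unfolding g_def by auto
  qed
  have antisym: "\<And>tt. tt \<in> tuples n m \<Longrightarrow> 2 \<le> m \<Longrightarrow> tt ! (m-2) = tt ! (m-1) \<Longrightarrow> \<rho> tt \<noteq> tzero F \<Longrightarrow>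
      {#tone F, tone F#} \<in> tnull F"
  proof -
    fix tt assume tt: "tt \<in> tuples n m" and m2: "2 \<le> m" and eq: "tt ! (m-2) = tt ! (m-1)" and nz: "\<rho> tt \<noteq> tzero F"
    define \<sigma> where "\<sigma> = Transposition.transpose (m-2) (m-1)"
    have p: "\<sigma> permutes {..<m}" unfolding \<sigma>_def using m2 by (intro permutes_swap_id) auto
    have ne: "\<not> evenperm \<sigma>" unfolding \<sigma>_def using m2 by (simp add: evenperm_swap)
    have len: "length tt = m" using tt by (simp add: tuples_def)
    have "map (\<lambda>k. tt ! \<sigma> k) [0..<m] = tt"
      by (rule nth_equalityI) (use len eq in \<open>auto simp: \<sigma>_def Transposition.transpose_def\<close>)
    hence "\<rho> tt = tmul F (tneg F (tone F)) (\<rho> tt)" using W2[OF tt p] ne by (simp add: sign_act_def)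
    thus "{#tone F, tone F#} \<in> tnull F" using neg_one_is_one[OF T nz] by simp
  qed
  have omega: "\<And>xs. SigmaT xs \<le> omegaJ J \<longleftrightarrow> (\<forall>t. SigmaT xs t \<le> U t - D t)"
    by (simp add: le_fun_def omegaJ_def U_def D_def)
  obtain \<beta>M where bM: "\<beta>M \<in> J" "\<beta>M i0 = U i0" using Uex by blast
  obtain \<beta>m where bm: "\<beta>m \<in> J" "\<beta>m i0 = D i0" using Dex by blast
  have "\<beta>m i0 < \<beta>M i0" using bM bm i0 by simp
  then obtain k where k: "k < n" "\<beta>m k > \<beta>M k" and b1J: "\<beta>M(i0 := \<beta>M i0 - 1, k := \<beta>M k + 1) \<in> J"
    using exch[OF bm(1) bM(1) i0(1)] by blast
  define \<beta>1 where "\<beta>1 = \<beta>M(i0 := \<beta>M i0 - 1, k := \<beta>M k + 1)"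
  have ki: "k \<noteq> i0" using k \<open>\<beta>m i0 < \<beta>M i0\<close> by auto
  have "\<beta>m i0 < \<beta>1 i0" using ki bM bm i0 by (simp add: \<beta>1_def)
  then obtain l where l: "l < n" "\<beta>m l > \<beta>1 l" and b2J: "\<beta>1(i0 := \<beta>1 i0 - 1, l := \<beta>1 l + 1) \<in> J"
    using exch[OF bm(1) b1J[folded \<beta>1_def] i0(1)] by blast
  define \<beta>2 where "\<beta>2 = \<beta>1(i0 := \<beta>1 i0 - 1, l := \<beta>1 l + 1)"
  have li: "l \<noteq> i0" using l \<open>\<beta>m i0 < \<beta>1 i0\<close> by auto
  have "\<beta>2 i0 < \<beta>M i0" using ki li bM bm i0 by (simp add: \<beta>2_def \<beta>1_def)
  then obtain j where j: "j < n" "\<beta>2 j > \<beta>M j" and b3a: "\<beta>M(i0 := \<beta>M i0 - 1, j := \<beta>M j + 1) \<in> J"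
    and b3b: "\<beta>2(i0 := \<beta>2 i0 + 1, j := \<beta>2 j - 1) \<in> J"
    using exch[OF b2J[folded \<beta>2_def] bM(1) i0(1)] by blast
  define \<beta>3 where "\<beta>3 = \<beta>M(i0 := \<beta>M i0 - 1, l := \<beta>M l + 1)"
  have b3J: "\<beta>3 \<in> J"
  proof (cases "j = l")
    case True thus ?thesis using b3a by (simp add: \<beta>3_def)
  next
    case False
    have jk: "j = k" using j False ki li \<open>\<beta>2 i0 < \<beta>M i0\<close>
      by (auto simp: \<beta>2_def \<beta>1_def split: if_splits)
    hence kl: "k \<noteq> l" using False by simp
    have "\<beta>2(i0 := \<beta>2 i0 + 1, j := \<beta>2 j - 1) = \<beta>3"
      using jk kl ki li bM bm i0 by (auto simp: fun_eq_iff \<beta>3_def \<beta>2_def \<beta>1_def)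
    thus ?thesis using b3b by simp
  qed
  have DM: "D i0 + 2 \<le> \<beta>M i0" using bM i0 by simp
  note K = key[OF bM(1) i0(1) DM]
  define \<alpha> where "\<alpha> = lst n ((\<lambda>t. \<beta>M t - D t)(i0 := \<beta>M i0 - D i0 - 2))"
  have at: "\<alpha> \<in> tuples n (m-2)" and m2: "2 \<le> m" and atab: "\<And>a b. a < n \<Longrightarrow> b < n \<Longrightarrow> \<alpha> @ [a,b] \<in> tuples n m"
    and Sg: "\<And>xs t. SigmaT (\<alpha> @ xs) t = ((\<lambda>t. \<beta>M t - D t)(i0 := \<beta>M i0 - D i0 - 2)) t + count (mset xs) t"
    using K unfolding \<alpha>_def by blast+
  have nzgen: "\<And>a b \<beta>'. a < n \<Longrightarrow> b < n \<Longrightarrow> \<beta>' \<in> J \<Longrightarrow>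
     (\<And>t. ((\<lambda>t. \<beta>M t - D t)(i0 := \<beta>M i0 - D i0 - 2)) t + count (mset [a,b]) t = \<beta>' t - D t) \<Longrightarrow>
     \<rho> (\<alpha> @ [a,b]) \<noteq> tzero F"
  proof -
    fix a b \<beta>' assume ab: "a < n" "b < n" and b': "\<beta>' \<in> J"
      and e: "\<And>t. ((\<lambda>t. \<beta>M t - D t)(i0 := \<beta>M i0 - D i0 - 2)) t + count (mset [a,b]) t = \<beta>' t - D t"
    have "SigmaT (\<alpha> @ [a,b]) \<in> Jbar J" by (rule inJbar[OF b']) (simp only: Sg e)
    thus "\<rho> (\<alpha> @ [a,b]) \<noteq> tzero F" using W1[OF atab[OF ab]] by simp
  qed
  have nii: "\<rho> (\<alpha> @ [i0,i0]) \<noteq> tzero F"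
    by (rule nzgen[OF i0(1) i0(1) bM(1)]) (use DM in auto)
  have nik: "\<rho> (\<alpha> @ [i0,k]) \<noteq> tzero F"
    by (rule nzgen[OF i0(1) k(1) b1J]) (use DM ki Dle[OF bM(1), of k] in auto)
  have nil: "\<rho> (\<alpha> @ [i0,l]) \<noteq> tzero F"
    by (rule nzgen[OF i0(1) l(1) b3J]) (use DM li Dle[OF bM(1), of l] in \<open>auto simp: \<beta>3_def\<close>)
  have nkl: "\<rho> (\<alpha> @ [k,l]) \<noteq> tzero F"
    by (rule nzgen[OF k(1) l(1) b2J[folded \<beta>2_def]])
       (use DM li ki Dle[OF bM(1), of l] Dle[OF bM(1), of k] in \<open>auto simp: \<beta>2_def \<beta>1_def\<close>)
  have two: "{#tone F, tone F#} \<in> tnull F"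
  proof (rule antisym[OF atab[OF i0(1) i0(1)] m2 _ nii])
    have "length \<alpha> = m - 2" using at by (simp add: tuples_def)
    moreover have "\<not> (m - Suc 0 < m - 2)" "m - Suc 0 - (m - 2) = 1" "\<not> (m - 2 < m - 2)" using m2 by arith+
    ultimately show "(\<alpha> @ [i0, i0]) ! (m - 2) = (\<alpha> @ [i0, i0]) ! (m - 1)"
      by (simp add: nth_append)
  qed
  have om1: "SigmaT (\<alpha> @ [i0, i0, k, l]) \<le> omegaJ J"
    unfolding omega
  proof
    fix t
    show "SigmaT (\<alpha> @ [i0, i0, k, l]) t \<le> U t - D t"
      using Uge[OF bM(1), of t] Uge[OF bm(1), of t] Dle[OF bM(1), of t] k l ki li DM bM(2)
      by (auto simp: Sg \<beta>1_def split: if_splits)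
  qed
  define a where "a = tmul F (\<rho> (\<alpha> @ [i0, k])) (\<rho> (\<alpha> @ [i0, l]))"
  define b where "b = tmul F (\<rho> (\<alpha> @ [i0, i0])) (\<rho> (\<alpha> @ [k, l]))"
  have anz: "a \<noteq> tzero F" unfolding a_def using mul_nz[OF T nik nil] .
  have bnz: "b \<noteq> tzero F" unfolding b_def using mul_nz[OF T nii nkl] .
  have "temb F a + temb F (tneg F a) + temb F b \<in> tnull F"
    using W3[OF m2 at i0(1) i0(1) k(1) l(1) om1] unfolding a_def b_def .
  hence "{#a, a, b#} \<in> tnull F" using neg_self[OF T two anz] anz bnz by (simp add: temb_def add_mset_commute)
  moreover obtain a' where a': "a' \<noteq> tzero F" "tmul F a a' = tone F" using inv_ex[OF T anz] by blast
  ultimately have "image_mset (tmul F a') {#a, a, b#} \<in> tnull F" using smult_null[OF T] by blast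
  hence "{#tone F, tone F, tmul F a' b#} \<in> tnull F" using a' mul_comm[OF T, of a' a] by simp
  moreover have "tmul F a' b \<noteq> tzero F" using mul_nz[OF T a'(1) bnz] .
  ultimately have near: "near_idempotent_tract F" using two unfolding near_idempotent_tract_def by blast
  have idem: "idempotent_tract F" if "i1 < n" "delta_max J i1 - delta_min J i1 \<ge> 3" for i1
  proof -
    have i1: "i1 < n" "D i1 + 3 \<le> U i1" using that by (auto simp: U_def D_def)
    obtain \<beta>M where bM: "\<beta>M \<in> J" "\<beta>M i1 = U i1" using Uex by blast
    obtain \<beta>m where bm: "\<beta>m \<in> J" "\<beta>m i1 = D i1" using Dex by blast
    have "\<beta>m i1 < \<beta>M i1" using bM bm i1 by simp
    then obtain k where k: "k < n" "\<beta>m k > \<beta>M k" and b1J: "\<beta>M(i1 := \<beta>M i1 - 1, k := \<beta>M k + 1) \<in> J"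
      using exch[OF bm(1) bM(1) i1(1)] by blast
    define \<beta>1 where "\<beta>1 = \<beta>M(i1 := \<beta>M i1 - 1, k := \<beta>M k + 1)"
    have ki: "k \<noteq> i1" using k \<open>\<beta>m i1 < \<beta>M i1\<close> by auto
    have b1i: "\<beta>1 i1 = U i1 - 1" using ki bM by (simp add: \<beta>1_def)
    have "\<beta>m i1 < \<beta>1 i1" using b1i bm i1 by simp
    then obtain l where l: "l < n" "\<beta>m l > \<beta>1 l" and b2J: "\<beta>1(i1 := \<beta>1 i1 - 1, l := \<beta>1 l + 1) \<in> J"
      using exch[OF bm(1) b1J[folded \<beta>1_def] i1(1)] by blast
    have li: "l \<noteq> i1" using l \<open>\<beta>m i1 < \<beta>1 i1\<close> by auto
    have D1: "D i1 + 2 \<le> \<beta>1 i1" using b1i i1 by simp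
    note K = key[OF b1J[folded \<beta>1_def] i1(1) D1]
    define \<alpha> where "\<alpha> = lst n ((\<lambda>t. \<beta>1 t - D t)(i1 := \<beta>1 i1 - D i1 - 2))"
    have at: "\<alpha> \<in> tuples n (m-2)" and m2: "2 \<le> m" and atab: "\<And>a b. a < n \<Longrightarrow> b < n \<Longrightarrow> \<alpha> @ [a,b] \<in> tuples n m"
      and Sg: "\<And>xs t. SigmaT (\<alpha> @ xs) t = ((\<lambda>t. \<beta>1 t - D t)(i1 := \<beta>1 i1 - D i1 - 2)) t + count (mset xs) t"
      using K unfolding \<alpha>_def by blast+
    have nzgen: "\<And>a b \<beta>'. a < n \<Longrightarrow> b < n \<Longrightarrow> \<beta>' \<in> J \<Longrightarrow>
       (\<And>t. ((\<lambda>t. \<beta>1 t - D t)(i1 := \<beta>1 i1 - D i1 - 2)) t + count (mset [a,b]) t = \<beta>' t - D t) \<Longrightarrow>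
       \<rho> (\<alpha> @ [a,b]) \<noteq> tzero F"
    proof -
      fix a b \<beta>' assume ab: "a < n" "b < n" and b': "\<beta>' \<in> J"
        and e: "\<And>t. ((\<lambda>t. \<beta>1 t - D t)(i1 := \<beta>1 i1 - D i1 - 2)) t + count (mset [a,b]) t = \<beta>' t - D t"
      have "SigmaT (\<alpha> @ [a,b]) \<in> Jbar J" by (rule inJbar[OF b']) (simp only: Sg e)
      thus "\<rho> (\<alpha> @ [a,b]) \<noteq> tzero F" using W1[OF atab[OF ab]] by simp
    qed
    have nii: "\<rho> (\<alpha> @ [i1,i1]) \<noteq> tzero F"
      by (rule nzgen[OF i1(1) i1(1) b1J[folded \<beta>1_def]]) (use D1 in auto)
    have nil: "\<rho> (\<alpha> @ [i1,l]) \<noteq> tzero F"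
      by (rule nzgen[OF i1(1) l(1) b2J]) (use D1 li Dle[OF b1J[folded \<beta>1_def], of l] in auto)
    have om1: "SigmaT (\<alpha> @ [i1, i1, i1, l]) \<le> omegaJ J"
      unfolding omega
    proof
      fix t
      show "SigmaT (\<alpha> @ [i1, i1, i1, l]) t \<le> U t - D t"
        using Uge[OF b1J[folded \<beta>1_def], of t] Uge[OF bm(1), of t] Dle[OF b1J[folded \<beta>1_def], of t] l li D1 b1i i1
        by (auto simp: Sg split: if_splits)
    qed
    define c where "c = tmul F (\<rho> (\<alpha> @ [i1, i1])) (\<rho> (\<alpha> @ [i1, l]))"
    have cnz: "c \<noteq> tzero F" unfolding c_def using mul_nz[OF T nii nil] .
    have "temb F c + temb F (tneg F c) + temb F c \<in> tnull F"
      using W3[OF m2 at i1(1) i1(1) i1(1) l(1) om1] unfolding c_def .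
    hence "{#c, c, c#} \<in> tnull F" using neg_self[OF T two cnz] cnz by (simp add: temb_def add_mset_commute)
    moreover obtain c' where c': "c' \<noteq> tzero F" "tmul F c c' = tone F" using inv_ex[OF T cnz] by blast
    ultimately have "image_mset (tmul F c') {#c, c, c#} \<in> tnull F" using smult_null[OF T] by blast
    hence "{#tone F, tone F, tone F#} \<in> tnull F" using c' mul_comm[OF T, of c' c] by simp
    thus ?thesis using two unfolding idempotent_tract_def by blast
  qed
  show ?thesis using near idem by blast
qed

end
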